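(* Let $K$ be the set of separable states of $\mathcal{B}(\mathbb{C}^2\otimes\mathbb{C}^2)$. Then the pure states $|01\rangle\langle01|$ and $|10\rangle\langle10|$ are not superposable in $K$.
   Context: States of $\mathcal{B}(\mathbb{C}^2\otimes\mathbb{C}^2)$ are identified with density operators on $\mathbb{C}^2\otimes\mathbb{C}^2$; a pure product state is $E\otimes F$ with $E,F$ rank-one projections on $\mathbb{C}^2$, and $K$ is the set of convex combinations of pure product states. $\{|0\rangle,|1\rangle\}$ is the standard orthonormal basis of $\mathbb{C}^2$ and $|ab\rangle=|a\rangle\otimes|b\rangle$. For a convex set $K$, $A(K)$ is the set of affine functions $K\to\mathbb{R}$, and for extreme points $x,y$ the affine ratio is $\langle x,y\rangle_K=\inf\{f(y): f\in A(K),\ \mathrm{range}(f)\subseteq[0,1],\ f(x)=1\}$. Extreme points $x,y$ are orthogonal if $\langle x,y\rangle_K=0$; orthogonal extreme points $x,y$ are superposable in $K$ if there is an extreme point $z$ of $K$ with $\langle x,z\rangle_K=\tfrac12=\langle y,z\rangle_K$. *)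

theory Defs
  imports "HOL-Analysis.Analysis"
begin

text \<open>Operators on C^2 are complex^2^2; operators on C^2 (x) C^2 are indexed by
  the pair type 2 \<times> 2, i.e. complex^(2\<times>2)^(2\<times>2).\<close>

definition ket :: "2 \<Rightarrow> complex ^ 2" where
  "ket a = axis a 1"

definition kron_vec :: "complex ^ 'a \<Rightarrow> complex ^ 'b \<Rightarrow> complex ^ ('a \<times> 'b)" where
  "kron_vec u w = (\<chi> p. u $ fst p * w $ snd p)"

definition kron :: "complex ^ 'a ^ 'a \<Rightarrow> complex ^ 'b ^ 'b \<Rightarrow> complex ^ ('a \<times> 'b) ^ ('a \<times> 'b)" where
  "kron A B = (\<chi> p q. A $ fst p $ fst q * B $ snd p $ snd q)"

definition outer :: "complex ^ 'n \<Rightarrow> complex ^ 'n ^ 'n" where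
  "outer v = (\<chi> i j. v $ i * cnj (v $ j))"

definition rank_one_proj :: "complex ^ 2 ^ 2 \<Rightarrow> bool" where
  "rank_one_proj E \<longleftrightarrow> (\<exists>v. norm v = 1 \<and> E = outer v)"

definition pure_product_states :: "(complex ^ (2 \<times> 2) ^ (2 \<times> 2)) set" where
  "pure_product_states = {kron E F | E F. rank_one_proj E \<and> rank_one_proj F}"

definition separable_states :: "(complex ^ (2 \<times> 2) ^ (2 \<times> 2)) set" where
  "separable_states = convex hull pure_product_states"

definition affine_fun_on :: "'a::real_vector set \<Rightarrow> ('a \<Rightarrow> real) \<Rightarrow> bool" where
  "affine_fun_on K f \<longleftrightarrow>
     (\<forall>x\<in>K. \<forall>y\<in>K. \<forall>t::real. 0 \<le> t \<and> t \<le> 1 \<longrightarrow>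
        f ((1 - t) *\<^sub>R x + t *\<^sub>R y) = (1 - t) * f x + t * f y)"

definition affine_ratio :: "'a::real_vector set \<Rightarrow> 'a \<Rightarrow> 'a \<Rightarrow> real" where
  "affine_ratio K x y =
     Inf {f y | f. affine_fun_on K f \<and> f ` K \<subseteq> {0..1} \<and> f x = 1}"

definition orthogonal_ext :: "'a::real_vector set \<Rightarrow> 'a \<Rightarrow> 'a \<Rightarrow> bool" where
  "orthogonal_ext K x y \<longleftrightarrow>
     x extreme_point_of K \<and> y extreme_point_of K \<and> affine_ratio K x y = 0"

definition superposable :: "'a::real_vector set \<Rightarrow> 'a \<Rightarrow> 'a \<Rightarrow> bool" where
  "superposable K x y \<longleftrightarrow> orthogonal_ext K x y \<and>
     (\<exists>z. z extreme_point_of K \<and> affine_ratio K x z = 1/2 \<and> affine_ratio K y z = 1/2)"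

end

theory Submission
  imports Defs
begin

lemma two_eq_zero2: "(2::2) = 0" by simp

abbreviation KK where "KK \<equiv> separable_states"

definition EE :: "2 \<Rightarrow> 2 \<Rightarrow> complex ^ (2 \<times> 2) ^ (2 \<times> 2)" where
  "EE a b = axis (a,b) (axis (a,b) 1)"

lemma EE_inner: "\<rho> \<bullet> EE a b = Re (\<rho> $ (a,b) $ (a,b))"
  by (simp add: EE_def inner_axis)

lemma norm_sum: "norm (v::complex^'n) = 1 \<Longrightarrow> (\<Sum>i\<in>UNIV. (cmod (v$i))^2) = 1"
  unfolding norm_vec_def L2_set_def by simp

lemma norm_ket: "norm (ket a) = 1"
proof -
  have e: "(\<lambda>i. (norm (ket a $ i))^2) = (\<lambda>i. if i = a then 1 else 0)"
    by (auto simp: ket_def axis_def fun_eq_iff)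
  have "(\<Sum>i\<in>UNIV. (norm (ket a $ i))^2) = 1"
    unfolding e by simp
  then show ?thesis unfolding norm_vec_def L2_set_def by simp
qed

lemma outer_kron: "outer (kron_vec u w) = kron (outer u) (outer w)"
  by (simp add: vec_eq_iff outer_def kron_def kron_vec_def algebra_simps)

lemma kron_entry: "kron (outer v) (outer w) $ (a,b) $ (a,b) =
   of_real ((cmod (v$a))^2 * (cmod (w$b))^2)"
  by (simp only: kron_def outer_def vec_lambda_beta fst_conv snd_conv complex_norm_square of_real_mult)

lemma pps_E: "s \<in> pure_product_states \<Longrightarrow>
   \<exists>v w. norm v = 1 \<and> norm w = 1 \<and> s = kron (outer v) (outer w)"
  unfolding pure_product_states_def rank_one_proj_def by blast

lemma cmod_le: "norm (v::complex^'n) = 1 \<Longrightarrow> (cmod (v$a))^2 \<le> 1"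
proof -
  assume "norm v = 1"
  from norm_sum[OF this] have "(\<Sum>i\<in>UNIV. (cmod (v$i))^2) = 1" .
  moreover have "(cmod (v$a))^2 \<le> (\<Sum>i\<in>UNIV. (cmod (v$i))^2)"
    by (rule member_le_sum) auto
  ultimately show ?thesis by simp
qed

lemma S_bounds: "s \<in> pure_product_states \<Longrightarrow> 0 \<le> s \<bullet> EE a b \<and> s \<bullet> EE a b \<le> 1"
proof -
  assume "s \<in> pure_product_states"
  then obtain v w where vw: "norm v = 1" "norm w = 1" "s = kron (outer v) (outer w)"
    using pps_E by blast
  have g: "s \<bullet> EE a b = (cmod (v$a))^2 * (cmod (w$b))^2"
    using vw by (simp add: EE_inner kron_entry)
  have "(cmod (v$a))^2 \<le> 1" "(cmod (w$b))^2 \<le> 1" using cmod_le vw by auto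
  then have "(cmod (v$a))^2 * (cmod (w$b))^2 \<le> 1"
    by (simp add: mult_le_one)
  then show ?thesis using g by simp
qed

lemma K_bounds: "\<rho> \<in> KK \<Longrightarrow> 0 \<le> \<rho> \<bullet> EE a b \<and> \<rho> \<bullet> EE a b \<le> 1"
proof -
  assume r: "\<rho> \<in> KK"
  let ?C = "{\<rho>. EE a b \<bullet> \<rho> \<ge> 0} \<inter> {\<rho>. EE a b \<bullet> \<rho> \<le> 1}"
  have "convex ?C" by (intro convex_Int convex_halfspace_ge convex_halfspace_le)
  moreover have "pure_product_states \<subseteq> ?C" using S_bounds by (auto simp: inner_commute)
  ultimately have "KK \<subseteq> ?C" unfolding separable_states_def by (rule hull_minimal[rotated])
  then show ?thesis using r by (auto simp: inner_commute)
qed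

lemma affine_E: "affine_fun_on A (\<lambda>\<rho>. \<rho> \<bullet> EE a b)"
  unfolding affine_fun_on_def by (simp add: inner_add_left)

lemma ratio_le:
  assumes "z \<in> K" "affine_fun_on K f" "f ` K \<subseteq> {0..1}" "f x = 1"
  shows "affine_ratio K x z \<le> f z"
  unfolding affine_ratio_def
proof (rule cInf_lower)
  show "f z \<in> {f z |f. affine_fun_on K f \<and> f ` K \<subseteq> {0..1} \<and> f x = 1}" using assms by blast
  show "bdd_below {f z |f. affine_fun_on K f \<and> f ` K \<subseteq> {0..1} \<and> f x = 1}"
    using assms(1) by (auto intro!: bdd_belowI[where m=0])
qed

lemma ratio_ge0:
  assumes "z \<in> K"
  shows "0 \<le> affine_ratio K x z"
  unfolding affine_ratio_def
proof (rule cInf_greatest)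
  have "affine_fun_on K (\<lambda>_. 1)" unfolding affine_fun_on_def by simp
  then show "{f z |f. affine_fun_on K f \<and> f ` K \<subseteq> {0..1} \<and> f x = 1} \<noteq> {}" by force
  show "\<And>y. y \<in> {f z |f. affine_fun_on K f \<and> f ` K \<subseteq> {0..1} \<and> f x = 1} \<Longrightarrow> 0 \<le> y"
    using assms by auto
qed

lemma E_range: "(\<lambda>\<rho>. \<rho> \<bullet> EE a b) ` KK \<subseteq> {0..1}"
  using K_bounds by auto

lemma x_entry: "outer (kron_vec (ket a) (ket b)) \<bullet> EE a b = 1"
  by (simp add: EE_inner outer_def kron_vec_def ket_def)

lemma x_in_S: "outer (kron_vec (ket a) (ket b)) \<in> pure_product_states"
  unfolding pure_product_states_def rank_one_proj_def outer_kron using norm_ket by blast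

lemma unique_S:
  assumes "s \<in> pure_product_states" "s \<bullet> EE a b = 1"
  shows "s = outer (kron_vec (ket a) (ket b))"
proof -
  obtain v w where vw: "norm v = 1" "norm w = 1" "s = kron (outer v) (outer w)"
    using pps_E assms(1) by blast
  have g: "(cmod (v$a))^2 * (cmod (w$b))^2 = 1"
    using vw assms(2) by (simp add: EE_inner kron_entry)
  have le: "(cmod (v$a))^2 \<le> 1" "(cmod (w$b))^2 \<le> 1" using cmod_le vw by auto
  have va: "(cmod (v$a))^2 = 1"
  proof (rule ccontr)
    assume "(cmod (v$a))^2 \<noteq> 1"
    then have "(cmod (v$a))^2 < 1" using le by simp
    then have "(cmod (v$a))^2 * (cmod (w$b))^2 < 1"
      using mult_left_le[OF le(2), of "(cmod (v$a))^2"] by simp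
    then show False using g by simp
  qed
  have wb: "(cmod (w$b))^2 = 1" using va g by simp
  have one: "outer u = outer (ket c)" if u: "norm u = 1" "(cmod (u$c))^2 = 1" for u :: "complex^2" and c
  proof -
    have S: "(\<Sum>i\<in>UNIV. (cmod (u$i))^2) = 1" using norm_sum u(1) .
    have "(\<Sum>i\<in>UNIV. (cmod (u$i))^2) = (cmod (u$c))^2 + (\<Sum>i\<in>UNIV-{c}. (cmod (u$i))^2)"
      by (simp add: sum.remove)
    then have "(\<Sum>i\<in>UNIV-{c}. (cmod (u$i))^2) = 0" using S u(2) by simp
    then have z: "\<forall>i\<in>UNIV-{c}. (cmod (u$i))^2 = 0"
      by (subst (asm) sum_nonneg_eq_0_iff) auto
    have z2: "i \<noteq> c \<Longrightarrow> u$i = 0" for i using z by auto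
    have uc: "u$c * cnj (u$c) = 1" using u(2) complex_norm_square[of "u$c"] by simp
    show ?thesis
      unfolding outer_def ket_def vec_eq_iff
      using z2 uc by (auto simp: axis_def)
  qed
  have "s = kron (outer (ket a)) (outer (ket b))"
    using vw one[OF vw(1) va] one[OF vw(2) wb] by simp
  then show ?thesis by (simp add: outer_kron)
qed

lemma key_ineq: "u * p + v * q < 1" if "0 \<le> u" "0 \<le> v" "u + v = 1" "p \<le> 1" "q \<le> 1"
    "(0 < u \<and> p < 1) \<or> (0 < v \<and> q < 1)" for u v p q :: real
proof -
  have a: "u * p \<le> u" "v * q \<le> v" using that mult_left_le by auto
  have "u * p < u \<or> v * q < v"
    using that(6) mult_strict_left_mono[of p 1 u] mult_strict_left_mono[of q 1 v] by auto
  then show ?thesis using a that(3) by linarith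
qed

lemma convex_A:
  fixes x E :: "'a::real_inner"
  assumes gx: "x \<bullet> E = 1"
  shows "convex ({q. q \<bullet> E < 1} \<union> {x})"
  unfolding convex_def
proof (intro ballI allI impI)
  fix y z and u v :: real
  assume xy: "y \<in> {q. q \<bullet> E < 1} \<union> {x}" "z \<in> {q. q \<bullet> E < 1} \<union> {x}"
    and uv: "0 \<le> u" "0 \<le> v" "u + v = 1"
  have gsum: "(u *\<^sub>R y + v *\<^sub>R z) \<bullet> E = u * (y \<bullet> E) + v * (z \<bullet> E)"
    by (simp add: inner_add_left)
  show "u *\<^sub>R y + v *\<^sub>R z \<in> {q. q \<bullet> E < 1} \<union> {x}"
  proof (cases "y = x \<and> z = x")
    case True
    then have "u *\<^sub>R y + v *\<^sub>R z = x" using uv by (simp flip: scaleR_add_left)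
    then show ?thesis by simp
  next
    case False
    show ?thesis
    proof (cases "u = 0 \<or> v = 0")
      case True
      then show ?thesis using uv xy by auto
    next
      case False2: False
      have "y \<bullet> E \<le> 1" "z \<bullet> E \<le> 1" using xy gx by auto
      moreover have "y \<bullet> E < 1 \<or> z \<bullet> E < 1" using xy False by auto
      ultimately have "u * (y \<bullet> E) + v * (z \<bullet> E) < 1" using key_ineq[OF uv] False2 uv by auto
      then show ?thesis using gsum by simp
    qed
  qed
qed

lemma extreme_generic:
  fixes x E :: "'a::real_inner"
  assumes xK: "x \<in> K" and KA: "K \<subseteq> {q. q \<bullet> E < 1} \<union> {x}" and gx: "x \<bullet> E = 1"
  shows "x extreme_point_of K"
  unfolding extreme_point_of_def
proof (intro conjI xK ballI notI)
  fix c d assume cd: "c \<in> K" "d \<in> K" "x \<in> open_segment c d"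
  then obtain u where u: "c \<noteq> d" "0 < u" "u < 1" "x = (1 - u) *\<^sub>R c + u *\<^sub>R d"
    by (auto simp: in_segment)
  have "x \<bullet> E = (1-u) * (c \<bullet> E) + u * (d \<bullet> E)" using u(4) by (simp add: inner_add_left)
  then have e: "(1-u) * (c \<bullet> E) + u * (d \<bullet> E) = 1" using gx by simp
  have b: "c \<bullet> E \<le> 1" "d \<bullet> E \<le> 1" using KA cd gx by auto
  have "\<not> (c \<bullet> E < 1 \<or> d \<bullet> E < 1)"
  proof
    assume h: "c \<bullet> E < 1 \<or> d \<bullet> E < 1"
    have "(1-u) * (c \<bullet> E) + u * (d \<bullet> E) < 1"
      by (rule key_ineq) (use u b h in auto)
    with e show False by simp
  qed
  then have "c = x" "d = x" using KA cd by auto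
  then show False using u(1) by simp
qed

lemma extreme_x: "outer (kron_vec (ket a) (ket b)) extreme_point_of KK"
proof (rule extreme_generic[where E = "EE a b"])
  show "outer (kron_vec (ket a) (ket b)) \<bullet> EE a b = 1" by (rule x_entry)
  show "outer (kron_vec (ket a) (ket b)) \<in> KK"
    unfolding separable_states_def using x_in_S by (rule hull_inc)
  have "pure_product_states \<subseteq> {q. q \<bullet> EE a b < 1} \<union> {outer (kron_vec (ket a) (ket b))}"
  proof
    fix s assume s: "s \<in> pure_product_states"
    show "s \<in> {q. q \<bullet> EE a b < 1} \<union> {outer (kron_vec (ket a) (ket b))}"
    proof (cases "s \<bullet> EE a b = 1")
      case True then show ?thesis using unique_S[OF s] by simp
    next
      case False then show ?thesis using S_bounds[OF s, of a b] by simp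
    qed
  qed
  then show "KK \<subseteq> {q. q \<bullet> EE a b < 1} \<union> {outer (kron_vec (ket a) (ket b))}"
    using convex_A[OF x_entry[of a b]] unfolding separable_states_def by (rule hull_minimal)
qed

theorem lemma3:
  shows "orthogonal_ext separable_states
            (outer (kron_vec (ket 0) (ket 1))) (outer (kron_vec (ket 1) (ket 0))) \<and>
         \<not> superposable separable_states
            (outer (kron_vec (ket 0) (ket 1))) (outer (kron_vec (ket 1) (ket 0)))"
proof -
  let ?x = "outer (kron_vec (ket 0) (ket 1))"
  let ?y = "outer (kron_vec (ket 1) (ket 0))"
  have yK: "?y \<in> KK" using extreme_x extreme_point_of_def by blast
  have "affine_ratio KK ?x ?y \<le> ?y \<bullet> EE 0 1"
    by (rule ratio_le[OF yK affine_E E_range x_entry])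
  moreover have "?y \<bullet> EE 0 1 = 0"
    by (simp add: EE_inner outer_def kron_vec_def ket_def axis_def)
  ultimately have r0: "affine_ratio KK ?x ?y = 0" using ratio_ge0[OF yK, of ?x] by linarith
  have orth: "orthogonal_ext KK ?x ?y"
    unfolding orthogonal_ext_def using extreme_x r0 by blast
  have nz: "\<not> (z extreme_point_of KK \<and> affine_ratio KK ?x z = 1/2 \<and> affine_ratio KK ?y z = 1/2)" for z
  proof
    assume H: "z extreme_point_of KK \<and> affine_ratio KK ?x z = 1/2 \<and> affine_ratio KK ?y z = 1/2"
    then have zK: "z \<in> KK" using extreme_point_of_def by blast
    have "z \<in> pure_product_states"
      using H extreme_point_of_convex_hull unfolding separable_states_def by blast
    then obtain v w where vw: "norm v = 1" "norm w = 1" "z = kron (outer v) (outer w)"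
      using pps_E by blast
    have "affine_ratio KK ?x z \<le> z \<bullet> EE 0 1"
      by (rule ratio_le[OF zK affine_E E_range x_entry])
    then have h1: "1/2 \<le> z \<bullet> EE 0 1" using H by linarith
    have "affine_ratio KK ?y z \<le> z \<bullet> EE 1 0"
      by (rule ratio_le[OF zK affine_E E_range x_entry])
    then have h2: "1/2 \<le> z \<bullet> EE 1 0" using H by linarith
    have g1: "z \<bullet> EE 0 1 = (cmod (v$0))^2 * (cmod (w$1))^2"
      using vw by (simp add: EE_inner kron_entry)
    have g2: "z \<bullet> EE 1 0 = (cmod (v$1))^2 * (cmod (w$0))^2"
      using vw by (simp add: EE_inner kron_entry)
    have sv: "(cmod (v$1))^2 + (cmod (v$0))^2 = 1" using norm_sum[OF vw(1)] by (simp add: sum_2 two_eq_zero2)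
    have sw: "(cmod (w$1))^2 + (cmod (w$0))^2 = 1" using norm_sum[OF vw(2)] by (simp add: sum_2 two_eq_zero2)
    define p where "p = (cmod (v$0))^2"
    define q where "q = (cmod (w$1))^2"
    have p: "0 \<le> p" "p \<le> 1" using cmod_le[OF vw(1)] by (auto simp: p_def)
    have q: "0 \<le> q" "q \<le> 1" using cmod_le[OF vw(2)] by (auto simp: q_def)
    have A: "1/2 \<le> p * q" using h1 g1 p_def q_def by simp
    have p1: "1-p = (cmod (v$1))^2" using sv p_def by linarith
    have q1: "1-q = (cmod (w$0))^2" using sw q_def by linarith
    have B: "1/2 \<le> (1-p) * (1-q)" unfolding p1 q1 using h2 g2 by simp
    have "p * q \<le> p" using mult_left_le[of q p] p q by simp
    moreover have "p * q \<le> q" using mult_left_le_one_le[of q p] p q by simp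
    moreover have "(1-p) * (1-q) \<le> 1-p" using mult_left_le[of "1-q" "1-p"] p q by simp
    moreover have "(1-p) * (1-q) \<le> 1-q" using mult_left_le_one_le[of "1-q" "1-p"] p q by simp
    ultimately have pq: "p = 1/2" "q = 1/2" using A B by auto
    have "p * q = 1/4" unfolding pq by simp
    with A show False by linarith
  qed
  show ?thesis using orth nz unfolding superposable_def by blast
qed
end
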